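(* Let $R$ be a tournament on $[n]=\{1,\dots,n\}$. Then there is a positive integer $M$ such that for every integer $N\ge M$ there exist independent, proper $N$-sided dice $D_1,\dots,D_n$ such that for all $i,j\in[n]$, $$P(D_i>D_j)>\tfrac12 \iff (i,j)\in R .$$
   Context: A tournament on a set $I$ is a subset $R\subset I\times I$ such that for every pair of distinct $i,j\in I$ exactly one of $(i,j),(j,i)$ lies in $R$, and $R$ contains no pair $(i,i)$. An $N$-sided die is a random variable on a sample space of $N$ equally likely outcomes (faces) taking positive integer values; it is proper if all its values lie in $\{1,\dots,N\}$ and the sum of the values over the $N$ faces is $N(N+1)/2$ (equivalently its expected value is $(N+1)/2$). Independent dice means the corresponding random variables are independent. *)

theory Defs
  imports "HOL-Probability.Probability_Mass_Function"
begin

definition tournament :: "'a set \<Rightarrow> ('a \<times> 'a) set \<Rightarrow> bool" where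
  "tournament I R \<longleftrightarrow> R \<subseteq> I \<times> I \<and> (\<forall>i. (i, i) \<notin> R) \<and>
     (\<forall>i\<in>I. \<forall>j\<in>I. i \<noteq> j \<longrightarrow> ((i, j) \<in> R \<longleftrightarrow> (j, i) \<notin> R))"

text \<open>An N-sided die is given by its face values d 1, ..., d N (faces equally likely).\<close>
definition proper_die :: "nat \<Rightarrow> (nat \<Rightarrow> nat) \<Rightarrow> bool" where
  "proper_die N d \<longleftrightarrow> (\<forall>f\<in>{1..N}. d f \<in> {1..N}) \<and>
     real (\<Sum>f=1..N. d f) = real N * (real N + 1) / 2"

definition die_pmf :: "nat \<Rightarrow> (nat \<Rightarrow> nat) \<Rightarrow> nat pmf" where
  "die_pmf N d = map_pmf d (pmf_of_set {1..N})"

definition prob_beats :: "nat \<Rightarrow> (nat \<Rightarrow> nat) \<Rightarrow> (nat \<Rightarrow> nat) \<Rightarrow> real" where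
  "prob_beats N d e = measure_pmf.prob (pair_pmf (die_pmf N d) (die_pmf N e)) {(x, y). x > y}"

end

theory Submission
  imports Defs
begin

lemma pair_pmf_of_set:
  assumes "finite A" "A \<noteq> {}" "finite B" "B \<noteq> {}"
  shows "pair_pmf (pmf_of_set A) (pmf_of_set B) = pmf_of_set (A \<times> B)"
proof (rule pmf_eqI)
  fix x :: "'a \<times> 'b"
  obtain a b where x: "x = (a, b)" by (cases x)
  show "pmf (pair_pmf (pmf_of_set A) (pmf_of_set B)) x = pmf (pmf_of_set (A \<times> B)) x"
    using assms by (simp add: x pmf_pair card_cartesian_product indicator_def)
qed

lemma prob_beats_card:
  assumes "N > 0"
  shows "prob_beats N d e = real (card {p \<in> {1..N} \<times> {1..N}. e (snd p) < d (fst p)}) / (real N)^2"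
proof -
  have "pair_pmf (die_pmf N d) (die_pmf N e) = map_pmf (\<lambda>(a, b). (d a, e b)) (pmf_of_set ({1..N} \<times> {1..N}))"
    unfolding die_pmf_def using assms by (simp add: map_pair[symmetric] pair_pmf_of_set)
  then have "prob_beats N d e = measure (pmf_of_set ({1..N} \<times> {1..N})) ((\<lambda>(a, b). (d a, e b)) -` {(x, y). x > y})"
    unfolding prob_beats_def by simp
  also have "\<dots> = real (card (({1..N} \<times> {1..N}) \<inter> ((\<lambda>(a, b). (d a, e b)) -` {(x, y). x > y}))) / real (card ({1..N} \<times> {1..N}))"
    using assms by (subst measure_pmf_of_set) auto
  also have "({1..N} \<times> {1..N}) \<inter> ((\<lambda>(a, b). (d a, e b)) -` {(x, y). x > y}) = {p \<in> {1..N} \<times> {1..N}. e (snd p) < d (fst p)}"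
    by auto
  also have "real (card ({1..N} \<times> {1..N})) = (real N)^2"
    by (simp add: card_cartesian_product power2_eq_square)
  finally show ?thesis .
qed


definition bdie :: "nat \<Rightarrow> nat \<Rightarrow> (nat \<Rightarrow> nat \<Rightarrow> nat) \<Rightarrow> nat \<Rightarrow> nat" where
  "bdie m P v f = (if 1 \<le> f \<and> f \<le> P * m then ((f - 1) div m) * m + 1 + v ((f - 1) div m) ((f - 1) mod m) else f)"

lemma decomp1:
  assumes "1 \<le> (f::nat)" shows "(f - 1) div m * m + 1 + (f - 1) mod m = f"
proof -
  have "(f - 1) div m * m + (f - 1) mod m = f - 1" by (rule div_mult_mod_eq)
  then show ?thesis using assms by linarith
qed

lemma divlt:
  assumes "1 \<le> (f::nat)" "f \<le> P*m" shows "(f - 1) div m < P"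
proof -
  have "f - 1 < P*m" using assms by simp
  then show ?thesis using less_mult_imp_div_less by blast
qed

lemma sum_blocks:
  fixes g :: "nat \<Rightarrow> 'a::comm_monoid_add"
  assumes "m > 0"
  shows "(\<Sum>f\<in>{1..P*m}. g f) = (\<Sum>q<P. \<Sum>r<m. g (q*m+1+r))"
proof -
  have "(\<Sum>q<P. \<Sum>r<m. g (q*m+1+r)) = (\<Sum>(q,r)\<in>{..<P}\<times>{..<m}. g (q*m+1+r))"
    by (simp add: sum.cartesian_product)
  also have "\<dots> = (\<Sum>f\<in>{1..P*m}. g f)"
  proof (rule sum.reindex_bij_witness[where i = "\<lambda>f. ((f-1) div m, (f-1) mod m)" and j = "\<lambda>(q,r). q*m+1+r"])
    fix a assume a: "a \<in> {..<P}\<times>{..<m}"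
    then obtain q r where qr: "a = (q, r)" "q < P" "r < m" by auto
    show "(\<lambda>f. ((f - 1) div m, (f - 1) mod m)) ((\<lambda>(q, r). q * m + 1 + r) a) = a" using qr by simp
    have "q*m + r < P*m"
    proof -
      have "(q+1)*m \<le> P*m" using qr by (intro mult_right_mono) auto
      then show ?thesis using qr by (simp add: algebra_simps)
    qed
    then show "(\<lambda>(q, r). q * m + 1 + r) a \<in> {1..P * m}" using qr by auto
    show "g ((\<lambda>(q, r). q * m + 1 + r) a) = (\<lambda>(q,r). g (q*m+1+r)) a" using qr by simp
  next
    fix f assume f: "f \<in> {1..P*m}"
    have "(f - 1) div m * m + 1 + (f - 1) mod m = f" using f decomp1 by simp
    then show "(\<lambda>(q, r). q * m + 1 + r) ((\<lambda>f. ((f - 1) div m, (f - 1) mod m)) f) = f" by simp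
    have "(f-1) div m < P" using f divlt by simp
    then show "(\<lambda>f. ((f - 1) div m, (f - 1) mod m)) f \<in> {..<P} \<times> {..<m}" using assms by simp
  qed
  finally show ?thesis by simp
qed

lemma bdie_block:
  assumes "m > 0" "q < P" "r < m"
  shows "bdie m P v (q*m+1+r) = q*m+1+v q r"
proof -
  have "(q+1)*m \<le> P*m" using assms by (intro mult_right_mono) auto
  then have "q*m+1+r \<le> P*m" using assms by (simp add: algebra_simps)
  then show ?thesis using assms by (simp add: bdie_def)
qed

lemma bdie_out:
  assumes "\<not> (1 \<le> f \<and> f \<le> P*m)" shows "bdie m P v f = f"
  using assms by (auto simp: bdie_def)

lemma bdie_range:
  assumes "m > 0" "P*m \<le> N" "\<forall>q<P. \<forall>r<m. v q r < m" "f \<in> {1..P*m}"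
  shows "bdie m P v f \<in> {1..P*m} \<and> (bdie m P v f - 1) div m = (f - 1) div m"
proof -
  define q where "q = (f-1) div m"
  define r where "r = (f-1) mod m"
  have fq: "f = q*m+1+r" using assms(4) decomp1[of f m] unfolding q_def r_def by simp
  have q: "q < P" using assms divlt unfolding q_def by simp
  have r: "r < m" using assms unfolding r_def by simp
  have v: "v q r < m" using assms q r by auto
  have b: "bdie m P v f = q*m+1+v q r" using fq bdie_block[OF assms(1) q r] by simp
  have "(q+1)*m \<le> P*m" using q by (intro mult_right_mono) auto
  then have "q*m+1+v q r \<le> P*m" using v by (simp add: algebra_simps)
  moreover have "(q*m+1+v q r - 1) div m = q" using v by simp
  ultimately show ?thesis using b q_def by simp
qed

definition Wc :: "nat \<Rightarrow> (nat \<Rightarrow> nat) \<Rightarrow> (nat \<Rightarrow> nat) \<Rightarrow> int" where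
  "Wc N d e = (\<Sum>a\<in>{1..N}. \<Sum>b\<in>{1..N}. of_bool (e b < d a))"

definition Phi :: "nat \<Rightarrow> (nat \<Rightarrow> nat) \<Rightarrow> (nat \<Rightarrow> nat) \<Rightarrow> int" where
  "Phi m v w = (\<Sum>r<m. \<Sum>s<m. of_bool (w s < v r) - of_bool (s < r))"

lemma div_mono_m1: "(x::nat) \<le> y \<Longrightarrow> (x - 1) div m \<le> (y - 1) div m"
  by (simp add: div_le_mono)

lemma Wc_decomp:
  assumes m: "m > 0" and PN: "P*m \<le> N"
    and vr: "\<forall>q<P. \<forall>r<m. v q r < m" and wr: "\<forall>q<P. \<forall>r<m. w q r < m"
  shows "Wc N (bdie m P v) (bdie m P w) = Wc N id id + (\<Sum>q<P. Phi m (v q) (w q))"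
proof -
  define d where "d = bdie m P v"
  define e where "e = bdie m P w"
  define I where "I = {1..N}"
  define J where "J = {1..P*m}"
  define h where "h = (\<lambda>a b. (of_bool (e b < d a) - of_bool (b < a) :: int))"
  define h' where "h' = (\<lambda>a b. if a \<in> J \<and> b \<in> J \<and> (a - 1) div m = (b - 1) div m then h a b else 0)"
  have JI: "J \<subseteq> I" using PN unfolding I_def J_def by auto
  have "Wc N d e - Wc N id id = (\<Sum>a\<in>I. \<Sum>b\<in>I. h a b)"
    unfolding Wc_def h_def I_def by (simp add: sum_subtractf)
  also have "\<dots> = (\<Sum>a\<in>I. \<Sum>b\<in>I. h' a b)"
  proof (intro sum.cong refl)
    fix a b assume a: "a \<in> I" and b: "b \<in> I"
    show "h a b = h' a b"
    proof (cases "a \<in> J")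
      case aJ: True
      have da: "d a \<in> J" "(d a - 1) div m = (a - 1) div m"
        using bdie_range[OF m PN vr, of a] aJ unfolding d_def J_def by auto
      show ?thesis
      proof (cases "b \<in> J")
        case bJ: True
        have eb: "e b \<in> J" "(e b - 1) div m = (b - 1) div m"
          using bdie_range[OF m PN wr, of b] bJ unfolding e_def J_def by auto
        show ?thesis
        proof (cases "(a - 1) div m = (b - 1) div m")
          case True then show ?thesis using aJ bJ unfolding h'_def by simp
        next
          case False
          then have "(a - 1) div m < (b - 1) div m \<or> (b - 1) div m < (a - 1) div m" by arith
          then have "h a b = 0"
          proof
            assume lt: "(a - 1) div m < (b - 1) div m"
            then have "\<not> b \<le> a" using div_mono_m1[of b a m] by linarith
            moreover have "\<not> e b \<le> d a" using div_mono_m1[of "e b" "d a" m] lt da eb by linarith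
            ultimately show ?thesis unfolding h_def by simp
          next
            assume lt: "(b - 1) div m < (a - 1) div m"
            then have "b < a" using div_mono_m1[of a b m] by linarith
            moreover have "e b < d a" using div_mono_m1[of "d a" "e b" m] lt da eb by linarith
            ultimately show ?thesis unfolding h_def by simp
          qed
          then show ?thesis using False unfolding h'_def by simp
        qed
      next
        case bJ: False
        then have "b > P*m" using b unfolding I_def J_def by auto
        moreover have "e b = b" using bJ unfolding e_def J_def by (intro bdie_out) auto
        moreover have "d a \<le> P*m" "a \<le> P*m" using da aJ unfolding J_def by auto
        ultimately have "h a b = 0" unfolding h_def by simp
        then show ?thesis using bJ unfolding h'_def by simp
      qed
    next
      case aJ: False
      then have ga: "a > P*m" using a unfolding I_def J_def by auto
      have daa: "d a = a" using aJ unfolding d_def J_def by (intro bdie_out) auto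
      have "h a b = 0"
      proof (cases "b \<in> J")
        case bJ: True
        have "e b \<in> J" using bdie_range[OF m PN wr, of b] bJ unfolding e_def J_def by auto
        then have "e b < a" "b < a" using ga bJ unfolding J_def by auto
        then show ?thesis unfolding h_def daa by simp
      next
        case bJ: False
        have "e b = b" using bJ unfolding e_def J_def by (intro bdie_out) auto
        then show ?thesis unfolding h_def daa by simp
      qed
      then show ?thesis using aJ unfolding h'_def by simp
    qed
  qed
  also have "\<dots> = (\<Sum>a\<in>J. \<Sum>b\<in>I. h' a b)"
    by (rule sum.mono_neutral_right) (use JI in \<open>auto simp: I_def h'_def\<close>)
  also have "\<dots> = (\<Sum>a\<in>J. \<Sum>b\<in>J. h' a b)"
    by (intro sum.cong refl sum.mono_neutral_right) (use JI in \<open>auto simp: I_def h'_def\<close>)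
  also have "\<dots> = (\<Sum>q<P. \<Sum>r<m. \<Sum>q'<P. \<Sum>s<m. h' (q*m+1+r) (q'*m+1+s))"
  proof -
    have "(\<Sum>b\<in>J. h' a b) = (\<Sum>q'<P. \<Sum>s<m. h' a (q'*m+1+s))" for a
      unfolding J_def by (rule sum_blocks[OF m])
    then have "(\<Sum>a\<in>J. \<Sum>b\<in>J. h' a b) = (\<Sum>a\<in>J. \<Sum>q'<P. \<Sum>s<m. h' a (q'*m+1+s))" by simp
    also have "\<dots> = (\<Sum>q<P. \<Sum>r<m. \<Sum>q'<P. \<Sum>s<m. h' (q*m+1+r) (q'*m+1+s))"
      unfolding J_def by (rule sum_blocks[OF m])
    finally show ?thesis .
  qed
  also have "\<dots> = (\<Sum>q<P. \<Sum>r<m. \<Sum>q'<P. if q = q' then (\<Sum>s<m. of_bool (w q s < v q r) - of_bool (s < r)) else 0)"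
  proof (intro sum.cong refl)
    fix q r q' assume q: "q \<in> {..<P}" and r: "r \<in> {..<m}" and q': "q' \<in> {..<P}"
    have inJ: "x*m+1+y \<in> J" if "x < P" "y < m" for x y
    proof -
      have "(x+1)*m \<le> P*m" using that by (intro mult_right_mono) auto
      then show ?thesis using that unfolding J_def by (auto simp: algebra_simps)
    qed
    show "(\<Sum>s<m. h' (q*m+1+r) (q'*m+1+s)) = (if q = q' then (\<Sum>s<m. of_bool (w q s < v q r) - of_bool (s < r)) else 0)"
    proof (cases "q = q'")
      case True
      have eq: "h' (q*m+1+r) (q'*m+1+s) = of_bool (w q s < v q r) - of_bool (s < r)" if s: "s < m" for s
      proof -
        have "h' (q'*m+1+r) (q'*m+1+s) = h (q'*m+1+r) (q'*m+1+s)"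
          using inJ q' r s unfolding h'_def by auto
        also have "\<dots> = of_bool (w q' s < v q' r) - of_bool (s < r)"
          unfolding h_def d_def e_def using bdie_block[OF m] q' r s by simp
        finally show ?thesis using True by simp
      qed
      show ?thesis using True eq by simp
    next
      case False
      have "h' (q*m+1+r) (q'*m+1+s) = 0" if "s < m" for s
        using False r that unfolding h'_def by simp
      then show ?thesis using False by simp
    qed
  qed
  also have "\<dots> = (\<Sum>q<P. Phi m (v q) (w q))"
    unfolding Phi_def by (simp add: sum_subtractf)
  finally show ?thesis unfolding d_def e_def by simp
qed

lemma cnt_lt [simp]: "x \<le> m \<Longrightarrow> card ({..<m} \<inter> {s. s < x}) = x"
proof -
  assume "x \<le> m"
  then have "{..<m} \<inter> {s. s < x} = {..<x}" by auto
  then show ?thesis by simp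
qed

lemma cnt_gt [simp]: "x < m \<Longrightarrow> card ({..<m} \<inter> {r. x < r}) = m - x - 1"
proof -
  assume "x < m"
  then have "{..<m} \<inter> {r. x < r} = {x<..<m}" by auto
  then show ?thesis using \<open>x < m\<close> by simp
qed

lemma double_sum_id: "2 * (\<Sum>r<m. int r) = int m * (int m - 1)"
  by (induction m) (auto simp: algebra_simps)

lemma Sr_eq: "(\<Sum>r<m. \<Sum>s<m. (of_bool (s < r) :: int)) = (\<Sum>r<m. int r)"
  by (intro sum.cong refl) simp

lemma Phi_split: "Phi m v w = (\<Sum>r<m. \<Sum>s<m. (of_bool (w s < v r) :: int)) - (\<Sum>r<m. int r)"
  unfolding Phi_def by (simp add: sum_subtractf Sr_eq)

lemma Phi_Z1:
  assumes "\<forall>s<m. w s = s" "\<forall>r<m. v r \<le> m" "(\<Sum>r<m. v r) = (\<Sum>r<m. r)"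
  shows "Phi m v w = 0"
proof -
  have "(\<Sum>r<m. \<Sum>s<m. (of_bool (w s < v r) :: int)) = (\<Sum>r<m. \<Sum>s<m. (of_bool (s < v r) :: int))"
    using assms(1) by (intro sum.cong refl) auto
  also have "\<dots> = (\<Sum>r<m. int (v r))"
    using assms(2) by (intro sum.cong refl) simp
  also have "\<dots> = (\<Sum>r<m. int r)"
    by (simp only: of_nat_sum[symmetric] assms(3))
  finally show ?thesis by (simp add: Phi_split)
qed

lemma Phi_Z2:
  assumes "\<forall>r<m. v r = r" "\<forall>s<m. w s < m" "(\<Sum>s<m. w s) = (\<Sum>s<m. s)"
  shows "Phi m v w = 0"
proof -
  have "Phi m v w = (\<Sum>r<m. \<Sum>s<m. (of_bool (w s < r) :: int) - of_bool (s < r))"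
    unfolding Phi_def using assms(1) by (intro sum.cong refl) auto
  also have "\<dots> = (\<Sum>s<m. \<Sum>r<m. (of_bool (w s < r) :: int) - of_bool (s < r))"
    by (rule sum.swap)
  also have "\<dots> = (\<Sum>s<m. int s - int (w s))"
  proof (intro sum.cong refl)
    fix s assume s: "s \<in> {..<m}"
    have ws: "Suc (w s) \<le> m" using s assms(2) by auto
    show "(\<Sum>r<m. (of_bool (w s < r) :: int) - of_bool (s < r)) = int s - int (w s)"
      using s ws by (simp add: sum_subtractf of_nat_diff)
  qed
  also have "\<dots> = int (\<Sum>s<m. s) - int (\<Sum>s<m. w s)"
    by (simp only: sum_subtractf of_nat_sum)
  also have "\<dots> = 0" using assms(3) by simp
  finally show ?thesis .
qed

definition win :: "nat \<Rightarrow> nat \<Rightarrow> nat" where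
  "win k r = (if r < 2 then 0 else if r = 2 then k + 2 else k + 1)"

lemma win_lt: "k \<ge> 2 \<Longrightarrow> win k r < 2*k+1"
  by (simp add: win_def)

lemma sum_win: assumes "k \<ge> 2" shows "(\<Sum>r<2*k+1. win k r) = (\<Sum>r<2*k+1. r)"
proof -
  have "int (\<Sum>r<2*k+1. win k r) = (\<Sum>r<2*k+1. int (k+1) - int (k+1) * of_bool (r < 2) + of_bool (r = 2))"
    unfolding of_nat_sum by (intro sum.cong refl) (auto simp: win_def)
  also have "\<dots> = (\<Sum>r<2*k+1. int (k+1)) - int (k+1) * (\<Sum>r<2*k+1. of_bool (r < 2)) + (\<Sum>r<2*k+1. of_bool (r = 2))"
    by (simp only: sum.distrib sum_subtractf sum_distrib_left)
  also have "(\<Sum>r<2*k+1. (of_bool (r < 2) :: int)) = 2"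
  proof -
    have "{..<2*k+1} \<inter> {r. r < 2} = {0,1}" using assms by auto
    then show ?thesis using assms by simp
  qed
  also have "(\<Sum>r<2*k+1. (of_bool (r = 2) :: int)) = 1"
  proof -
    have "(\<Sum>r<2*k+1. (of_bool (r = 2) :: int)) = (\<Sum>r<2*k+1. if r = 2 then 1 else 0)"
      by (intro sum.cong) auto
    also have "\<dots> = 1" using assms by (simp only: sum.delta finite_lessThan) simp
    finally show ?thesis .
  qed
  finally have a: "int (\<Sum>r<2*k+1. win k r) = int (2*k+1) * int (k+1) - int (k+1) * 2 + 1" by simp
  have b: "2 * int (\<Sum>r<2*k+1. r) = int (2*k+1) * (int (2*k+1) - 1)"
    using double_sum_id[of "2*k+1"] by (simp add: of_nat_sum)
  have "2 * int (\<Sum>r<2*k+1. win k r) = 2 * int (\<Sum>r<2*k+1. r)"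
    unfolding a b by (simp add: algebra_simps)
  then have "int (\<Sum>r<2*k+1. win k r) = int (\<Sum>r<2*k+1. r)" by linarith
  then show ?thesis using of_nat_eq_iff by blast
qed

lemma Phi_G1:
  assumes "k \<ge> 2" "m = 2*k+1"
  shows "2 * Phi m (win k) (\<lambda>_. k) = int m * (int m - 3)"
proof -
  have "(\<Sum>r<m. \<Sum>s<m. (of_bool (k < win k r) :: int)) = (\<Sum>r<m. int m * of_bool (k < win k r))"
    by simp
  also have "\<dots> = int m * int (card ({..<m} \<inter> {r. k < win k r}))"
    by (simp add: sum_distrib_left[symmetric])
  also have "{..<m} \<inter> {r. k < win k r} = {2..<m}" using assms by (auto simp: win_def)
  finally have a: "(\<Sum>r<m. \<Sum>s<m. (of_bool (k < win k r) :: int)) = int m * (int m - 2)"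
    using assms by simp
  have b: "2 * (\<Sum>r<m. int r) = int m * (int m - 1)" by (rule double_sum_id)
  show ?thesis unfolding Phi_split a using b by (simp add: algebra_simps)
qed

lemma Phi_G2:
  assumes "k \<ge> 2" "m = 2*k+1"
  shows "2 * Phi m (\<lambda>_. k) (win k) = int m * (5 - int m)"
proof -
  have "(\<Sum>r<m. \<Sum>s<m. (of_bool (win k s < k) :: int)) = (\<Sum>r<m. int (card ({..<m} \<inter> {s. win k s < k})))"
    by simp
  also have "{..<m} \<inter> {s. win k s < k} = {0,1}" using assms by (auto simp: win_def)
  finally have a: "(\<Sum>r<m. \<Sum>s<m. (of_bool (win k s < k) :: int)) = int m * 2"
    by simp
  have b: "2 * (\<Sum>r<m. int r) = int m * (int m - 1)" by (rule double_sum_id)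
  show ?thesis unfolding Phi_split a using b by (simp add: algebra_simps)
qed

lemma Wc_id: "2 * Wc N id id = int N * (int N - 1)"
proof -
  have "Wc N id id = (\<Sum>a\<in>{1..N}. int (a - 1))"
    unfolding Wc_def
  proof (intro sum.cong refl)
    fix a assume a: "a \<in> {1..N}"
    then have "{1..N} \<inter> {b. b < a} = {1..<a}" by auto
    then show "(\<Sum>b\<in>{1..N}. (of_bool (id b < id a) :: int)) = int (a - 1)" by simp
  qed
  moreover have "2 * (\<Sum>a\<in>{1..N}. int (a - 1)) = int N * (int N - 1)"
    by (induction N) (auto simp: algebra_simps atLeastAtMostSuc_conv)
  ultimately show ?thesis by simp
qed

lemma card_Wc: "int (card {p \<in> {1..N} \<times> {1..N}. e (snd p) < d (fst p)}) = Wc N d e"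
proof -
  have "int (card {p \<in> {1..N} \<times> {1..N}. e (snd p) < d (fst p)}) = (\<Sum>p\<in>{1..N} \<times> {1..N}. (of_bool (e (snd p) < d (fst p)) :: int))"
  proof -
    have eq: "{p \<in> {1..N} \<times> {1..N}. e (snd p) < d (fst p)} = ({1..N} \<times> {1..N}) \<inter> {p. e (snd p) < d (fst p)}" by auto
    have sumeq: "(\<Sum>p\<in>{1..N} \<times> {1..N}. (of_bool (e (snd p) < d (fst p)) :: int)) = of_nat (card (({1..N} \<times> {1..N}) \<inter> {p. e (snd p) < d (fst p)}))"
      by (intro sum_of_bool_eq finite_cartesian_product finite_atLeastAtMost)
    show ?thesis by (subst eq, rule sumeq[symmetric])
  qed
  also have "\<dots> = Wc N d e" unfolding Wc_def by (simp only: sum.cartesian_product' fst_conv snd_conv)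
  finally show ?thesis .
qed

lemma prob_iff:
  assumes "N > 0"
  shows "(prob_beats N d e > 1/2) \<longleftrightarrow> 2 * Wc N d e > int N ^ 2"
proof -
  have pos: "(real N)^2 > 0" using assms by simp
  have "prob_beats N d e = real_of_int (Wc N d e) / (real N)^2"
  proof -
    have "real_of_int (Wc N d e) = real (card {p \<in> {1..N} \<times> {1..N}. e (snd p) < d (fst p)})"
      by (simp only: card_Wc[where d=d and e=e and N=N, symmetric] of_int_of_nat_eq)
    then show ?thesis using prob_beats_card[OF assms, of d e] by simp
  qed
  note eq = this
  have "(real_of_int (Wc N d e) / (real N)^2 > 1/2) \<longleftrightarrow> 2 * real_of_int (Wc N d e) > (real N)^2"
    using pos by (simp add: field_simps)
  then have "(prob_beats N d e > 1/2) \<longleftrightarrow> 2 * real_of_int (Wc N d e) > (real N)^2"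
    by (simp only: eq)
  moreover have "(2 * real_of_int (Wc N d e) > (real N)^2) \<longleftrightarrow> 2 * Wc N d e > int N ^ 2"
  proof -
    have "real_of_int (2 * Wc N d e) = 2 * real_of_int (Wc N d e)" by simp
    moreover have "real_of_int (int N ^ 2) = (real N)^2" by simp
    ultimately show ?thesis using of_int_less_iff[of "int N ^ 2" "2 * Wc N d e", where 'a=real] by simp
  qed
  ultimately show ?thesis by simp
qed

lemma Wc_self: "2 * Wc N d d \<le> int N ^ 2"
proof -
  have "Wc N d d = (\<Sum>b\<in>{1..N}. \<Sum>a\<in>{1..N}. (of_bool (d b < d a) :: int))"
    unfolding Wc_def by (rule sum.swap)
  then have "2 * Wc N d d = (\<Sum>a\<in>{1..N}. \<Sum>b\<in>{1..N}. (of_bool (d b < d a) + of_bool (d a < d b) :: int))"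
    unfolding Wc_def by (simp add: sum.distrib)
  also have "\<dots> \<le> (\<Sum>a\<in>{1..N}. \<Sum>b\<in>{1..N}. (1::int))"
    by (intro sum_mono) auto
  also have "\<dots> = int N ^ 2" by (simp add: power2_eq_square)
  finally show ?thesis .
qed

lemma bdie_proper:
  assumes m: "m > 0" and PN: "P*m \<le> N" and vr: "\<forall>q<P. \<forall>r<m. v q r < m"
    and vs: "\<forall>q<P. (\<Sum>r<m. v q r) = (\<Sum>r<m. r)"
  shows "proper_die N (bdie m P v)"
proof -
  have range: "bdie m P v f \<in> {1..N}" if f: "f \<in> {1..N}" for f
  proof (cases "f \<le> P*m")
    case True
    then show ?thesis using bdie_range[OF m PN vr, of f] f PN by auto
  next
    case False
    then show ?thesis using f by (simp add: bdie_def)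
  qed
  have "(\<Sum>f\<in>{1..N}. int (bdie m P v f) - int f) = (\<Sum>f\<in>{1..P*m}. int (bdie m P v f) - int f)"
    by (rule sum.mono_neutral_right) (use PN in \<open>auto simp: bdie_def\<close>)
  also have "\<dots> = (\<Sum>q<P. \<Sum>r<m. int (bdie m P v (q*m+1+r)) - int (q*m+1+r))"
    by (rule sum_blocks[OF m])
  also have "\<dots> = (\<Sum>q<P. \<Sum>r<m. int (v q r) - int r)"
  proof (intro sum.cong refl)
    fix q r assume q: "q \<in> {..<P}" and r: "r \<in> {..<m}"
    have "bdie m P v (q*m+1+r) = q*m+1+v q r" using bdie_block[OF m, of q P r v] q r by simp
    then show "int (bdie m P v (q*m+1+r)) - int (q*m+1+r) = int (v q r) - int r" by simp
  qed
  also have "\<dots> = 0"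
  proof (rule sum.neutral, intro ballI)
    fix q assume q: "q \<in> {..<P}"
    have e: "(\<Sum>r<m. v q r) = (\<Sum>r<m. r)" using vs q by simp
    have z1: "(\<Sum>r<m. int (v q r) - int r) = int (\<Sum>r<m. v q r) - int (\<Sum>r<m. r)"
      by (simp only: sum_subtractf of_nat_sum)
    have z2: "int (\<Sum>r<m. v q r) - int (\<Sum>r<m. r) = 0" using e by simp
    show "(\<Sum>r<m. int (v q r) - int r) = 0" using z1 z2 by linarith
  qed
  finally have "(\<Sum>f\<in>{1..N}. int (bdie m P v f)) - (\<Sum>f\<in>{1..N}. int f) = 0"
    by (simp only: sum_subtractf)
  then have "int (\<Sum>f\<in>{1..N}. bdie m P v f) = int (\<Sum>f\<in>{1..N}. f)"
    unfolding of_nat_sum by linarith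
  then have s: "(\<Sum>f\<in>{1..N}. bdie m P v f) = (\<Sum>f\<in>{1..N}. f)" using of_nat_eq_iff by blast
  have g: "2 * (\<Sum>i = Suc 0..N. real i) = real N * (real N + 1)"
    by (rule double_gauss_sum_from_Suc_0)
  have "real (\<Sum>f\<in>{1..N}. bdie m P v f) = real N * (real N + 1) / 2"
    unfolding s using g by (simp add: of_nat_sum)
  then show ?thesis unfolding proper_die_def using range by auto
qed

definition vals :: "(nat \<times> nat) set \<Rightarrow> nat \<Rightarrow> nat \<Rightarrow> nat \<Rightarrow> nat \<Rightarrow> nat \<Rightarrow> nat" where
  "vals R n k i q r = (if (q div n + 1, q mod n + 1) \<in> R then
     (if i = q div n + 1 then win k r else if i = q mod n + 1 then k else r) else r)"

lemma vals_lt: "k \<ge> 2 \<Longrightarrow> r < 2*k+1 \<Longrightarrow> vals R n k i q r < 2*k+1"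
  using win_lt[of k r] by (simp add: vals_def)

lemma sum_const_k: "(\<Sum>r<2*k+1. k) = (\<Sum>r<2*k+1. (r::nat))"
proof -
  have "2 * int (\<Sum>r<2*k+1. r) = int (2*k+1) * (int (2*k+1) - 1)"
    using double_sum_id[of "2*k+1"] by (simp add: of_nat_sum)
  then have "int (\<Sum>r<2*k+1. r) = int ((2*k+1) * k)" by (simp add: algebra_simps)
  then have "(\<Sum>r<2*k+1. r) = (2*k+1) * k" using of_nat_eq_iff by blast
  moreover have "(\<Sum>r<2*k+1. k) = (2*k+1) * k" by simp
  ultimately show ?thesis by simp
qed

lemma vals_sum: "k \<ge> 2 \<Longrightarrow> (\<Sum>r<2*k+1. vals R n k i q r) = (\<Sum>r<2*k+1. r)"
  using sum_win[of k] sum_const_k[of k] by (simp add: vals_def)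

lemma enc:
  assumes "x \<in> {1..(n::nat)}" "y \<in> {1..n}"
  shows "(x-1)*n + (y-1) < n*n" "((x-1)*n + (y-1)) div n + 1 = x" "((x-1)*n + (y-1)) mod n + 1 = y"
proof -
  have "(x-1)*n + (y-1) < (x-1)*n + n" using assms by auto
  also have "\<dots> = x * n" using assms by (cases x) auto
  also have "\<dots> \<le> n * n" using assms by auto
  finally show "(x-1)*n + (y-1) < n*n" .
  obtain a b where ab: "x = Suc a" "y = Suc b" using assms by (cases x; cases y) auto
  have "b < n" using assms ab by auto
  then show "((x-1)*n + (y-1)) div n + 1 = x" "((x-1)*n + (y-1)) mod n + 1 = y" unfolding ab by auto
qed

lemma pair_sum:
  assumes T: "tournament {1..n} R" and i: "i \<in> {1..n}" and j: "j \<in> {1..n}" and ij: "i \<noteq> j"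
    and k: "k \<ge> 2" and m: "m = 2*k+1"
  shows "(\<Sum>q<n*n. Phi m (vals R n k i q) (vals R n k j q)) =
           (if (i, j) \<in> R then Phi m (win k) (\<lambda>_. k) else Phi m (\<lambda>_. k) (win k))"
proof -
  have npos: "n > 0" using i by auto
  have tour: "(i, j) \<in> R \<longleftrightarrow> (j, i) \<notin> R" using T i j ij unfolding tournament_def by blast
  define q0 where "q0 = (if (i, j) \<in> R then (i-1)*n + (j-1) else (j-1)*n + (i-1))"
  have q0: "q0 < n*n" unfolding q0_def using enc(1)[OF i j] enc(1)[OF j i] by auto
  have nice_lt: "\<forall>r<m. vals R n k x q r < m" for x q using vals_lt[OF k] m by auto
  have nice_le: "\<forall>r<m. vals R n k x q r \<le> m" for x q using nice_lt[of x q] by (auto intro: less_imp_le)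
  have nice_sum: "(\<Sum>r<m. vals R n k x q r) = (\<Sum>r<m. r)" for x q using vals_sum[OF k] m by simp
  have zero: "Phi m (vals R n k i q) (vals R n k j q) = 0" if q: "q < n*n" "q \<noteq> q0" for q
  proof -
    define a where "a = q div n + 1"
    define b where "b = q mod n + 1"
    have qab: "q = (a-1)*n + (b-1)" unfolding a_def b_def by simp
    show ?thesis
    proof (cases "(a, b) \<in> R")
      case False
      then have "vals R n k x q r = r" for x r unfolding vals_def a_def b_def by simp
      then show ?thesis by (intro Phi_Z1) (auto simp: m)
    next
      case abR: True
      show ?thesis
      proof (cases "i \<noteq> a \<and> i \<noteq> b")
        case True
        then have "vals R n k i q r = r" for r unfolding vals_def a_def b_def by auto
        then show ?thesis by (intro Phi_Z2 nice_lt nice_sum) auto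
      next
        case iab: False
        show ?thesis
        proof (cases "j \<noteq> a \<and> j \<noteq> b")
          case True
          then have "vals R n k j q r = r" for r unfolding vals_def a_def b_def by auto
          then show ?thesis by (intro Phi_Z1 nice_le nice_sum) auto
        next
          case False
          then have "(i = a \<and> j = b) \<or> (i = b \<and> j = a)" using iab ij by auto
          then have "q = q0"
          proof
            assume "i = a \<and> j = b"
            then show ?thesis using abR qab unfolding q0_def by auto
          next
            assume "i = b \<and> j = a"
            then have "(i, j) \<notin> R" using abR tour by auto
            then show ?thesis using \<open>i = b \<and> j = a\<close> qab unfolding q0_def by auto
          qed
          then show ?thesis using q by simp
        qed
      qed
    qed
  qed
  have "(\<Sum>q<n*n. Phi m (vals R n k i q) (vals R n k j q)) = Phi m (vals R n k i q0) (vals R n k j q0)"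
  proof -
    have "(\<Sum>q<n*n. Phi m (vals R n k i q) (vals R n k j q)) =
          Phi m (vals R n k i q0) (vals R n k j q0) + (\<Sum>q\<in>{..<n*n} - {q0}. Phi m (vals R n k i q) (vals R n k j q))"
      using q0 by (subst sum.remove) auto
    also have "(\<Sum>q\<in>{..<n*n} - {q0}. Phi m (vals R n k i q) (vals R n k j q)) = 0"
      using zero by (intro sum.neutral) auto
    finally show ?thesis by simp
  qed
  also have "\<dots> = (if (i, j) \<in> R then Phi m (win k) (\<lambda>_. k) else Phi m (\<lambda>_. k) (win k))"
  proof (cases "(i, j) \<in> R")
    case True
    have q0e: "q0 = (i-1)*n + (j-1)" using True by (simp add: q0_def)
    have e1: "q0 div n + 1 = i" "q0 mod n + 1 = j" unfolding q0e by (rule enc(2)[OF i j], rule enc(3)[OF i j])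
    have "vals R n k i q0 = win k" "vals R n k j q0 = (\<lambda>_. k)"
      using e1 True ij by (auto simp: vals_def fun_eq_iff)
    then show ?thesis using True by simp
  next
    case False
    then have jiR: "(j, i) \<in> R" using tour by auto
    have q0e: "q0 = (j-1)*n + (i-1)" using False by (simp add: q0_def)
    have e1: "q0 div n + 1 = j" "q0 mod n + 1 = i" unfolding q0e by (rule enc(2)[OF j i], rule enc(3)[OF j i])
    have "vals R n k j q0 = win k" "vals R n k i q0 = (\<lambda>_. k)"
      using e1 jiR ij by (auto simp: vals_def fun_eq_iff)
    then show ?thesis using False by simp
  qed
  finally show ?thesis .
qed

theorem theorem1p1:
  fixes n :: nat and R :: "(nat \<times> nat) set"
  assumes "tournament {1..n} R"
  shows "\<exists>M::nat. M > 0 \<and> (\<forall>N\<ge>M. \<exists>D :: nat \<Rightarrow> nat \<Rightarrow> nat.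
           (\<forall>i\<in>{1..n}. proper_die N (D i)) \<and>
           (\<forall>i\<in>{1..n}. \<forall>j\<in>{1..n}. prob_beats N (D i) (D j) > 1/2 \<longleftrightarrow> (i, j) \<in> R))"
proof -
  define K where "K = n*n + 1"
  define M where "M = 4*K*(4*K+4)"
  have Kpos: "K \<ge> 1" unfolding K_def by simp
  have "M > 0" unfolding M_def using Kpos by simp
  moreover have "\<exists>D :: nat \<Rightarrow> nat \<Rightarrow> nat.
           (\<forall>i\<in>{1..n}. proper_die N (D i)) \<and>
           (\<forall>i\<in>{1..n}. \<forall>j\<in>{1..n}. prob_beats N (D i) (D j) > 1/2 \<longleftrightarrow> (i, j) \<in> R)"
    if NM: "N \<ge> M" for N
  proof -
    define k where "k = N div (4*K)"
    define m where "m = 2*k+1"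
    define P where "P = n*n"
    have "M div (4*K) = 4*K+4" unfolding M_def using Kpos by simp
    then have kb: "k \<ge> 4*K+4" unfolding k_def using div_le_mono[OF NM, of "4*K"] by simp
    then have k2: "k \<ge> 2" by simp
    have mpos: "m > 0" unfolding m_def by simp
    have dm: "N = k * (4*K) + N mod (4*K)" unfolding k_def by (rule div_mult_mod_eq[symmetric])
    have md: "N mod (4*K) < 4*K" using Kpos by simp
    have N1: "4*(K*k) \<le> N" using dm by (simp add: algebra_simps)
    have N2: "N < 4*(K*k) + 4*K" using dm md by (simp add: algebra_simps)
    have MK: "M \<ge> 2*K" unfolding M_def using Kpos by (simp add: algebra_simps)
    have Npos: "N > 0" using NM \<open>M > 0\<close> by simp
    have PN: "P*m \<le> N"
    proof -
      have "P*m \<le> K*m" unfolding P_def K_def by simp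
      also have "\<dots> = 2*(K*k) + K" unfolding m_def by (simp add: algebra_simps)
      finally show ?thesis using N1 MK NM by linarith
    qed
    have big: "int N < int m * (int m - 3)"
    proof -
      have kb': "int k \<ge> 4 * int K + 4" using kb by simp
      have h1': "int k * int k \<ge> (4 * int K + 4) * int k" using kb' by (intro mult_right_mono) auto
      have h2': "int K * 1 \<le> int K * int k" using kb' by (intro mult_left_mono) auto
      have e: "int m * (int m - 3) = 4 * (int k * int k) - 2 * int k - 2" unfolding m_def by (simp add: algebra_simps)
      have "int N < int (4*(K*k) + 4*K)" using N2 by (simp only: of_nat_less_iff)
      also have "int (4*(K*k) + 4*K) = 4 * (int K * int k) + 4 * int K" by simp
      finally have N2': "int N < 4 * (int K * int k) + 4 * int K" .
      have KK: "int K \<ge> 1" using Kpos by simp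
      have h3: "int K * int k \<ge> int K * 1" using kb' KK by (intro mult_left_mono) auto
      show ?thesis unfolding e using h1' h2' N2' kb' KK by (simp add: algebra_simps)
    qed
    define D where "D = (\<lambda>i. bdie m P (vals R n k i))"
    have vr: "\<forall>q<P. \<forall>r<m. vals R n k i q r < m" for i using vals_lt[OF k2] unfolding m_def by auto
    have vs: "\<forall>q<P. (\<Sum>r<m. vals R n k i q r) = (\<Sum>r<m. r)" for i using vals_sum[OF k2] unfolding m_def by auto
    have proper: "\<forall>i\<in>{1..n}. proper_die N (D i)"
      unfolding D_def using bdie_proper[OF mpos PN vr vs] by auto
    have beats: "prob_beats N (D i) (D j) > 1/2 \<longleftrightarrow> (i, j) \<in> R" if i: "i \<in> {1..n}" and j: "j \<in> {1..n}" for i j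
    proof (cases "i = j")
      case True
      have "(i, i) \<notin> R" using assms unfolding tournament_def by auto
      moreover have "\<not> 2 * Wc N (D i) (D i) > int N ^ 2" using Wc_self[of N "D i"] by simp
      ultimately show ?thesis using True prob_iff[OF Npos] by simp
    next
      case False
      have dec: "Wc N (D i) (D j) = Wc N id id + (\<Sum>q<P. Phi m (vals R n k i q) (vals R n k j q))"
        unfolding D_def by (rule Wc_decomp[OF mpos PN vr vr])
      have ps: "(\<Sum>q<P. Phi m (vals R n k i q) (vals R n k j q)) =
           (if (i, j) \<in> R then Phi m (win k) (\<lambda>_. k) else Phi m (\<lambda>_. k) (win k))"
        unfolding P_def by (rule pair_sum[OF assms i j False k2 m_def])
      have wid: "2 * Wc N id id = int N * (int N - 1)" by (rule Wc_id)
      show ?thesis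
      proof (cases "(i, j) \<in> R")
        case True
        have "2 * Phi m (win k) (\<lambda>_. k) = int m * (int m - 3)" by (rule Phi_G1[OF k2 m_def])
        then have "2 * Wc N (D i) (D j) = int N * (int N - 1) + int m * (int m - 3)"
          using dec ps wid True by simp
        then have "2 * Wc N (D i) (D j) > int N ^ 2" using big by (simp add: power2_eq_square algebra_simps)
        then show ?thesis using True prob_iff[OF Npos] by simp
      next
        case False
        have "2 * Phi m (\<lambda>_. k) (win k) = int m * (5 - int m)" by (rule Phi_G2[OF k2 m_def])
        moreover have "int m * (5 - int m) \<le> 0" using k2 unfolding m_def by (simp add: mult_nonneg_nonpos)
        ultimately have "2 * Wc N (D i) (D j) \<le> int N * (int N - 1)"
          using dec ps wid False by simp
        then have "\<not> 2 * Wc N (D i) (D j) > int N ^ 2" by (simp add: power2_eq_square algebra_simps)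
        then show ?thesis using False prob_iff[OF Npos] by simp
      qed
    qed
    show ?thesis using proper beats by blast
  qed
  ultimately show ?thesis by blast
qed

end
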